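(* Let $\mathcal H_\mathrm{S},\mathcal H_\mathrm{M},\mathcal H_\mathrm{R}$ be finite-dimensional Hilbert spaces, $\rho^\mathrm{i}_\mathrm{SM}$ any density operator on $\mathcal H_\mathrm{S}\otimes\mathcal H_\mathrm{M}$, $\mathcal H_\mathrm{R}$ a Hermitian reservoir Hamiltonian, $\beta>0$, $\rho^\mathrm{i}_\mathrm{R}=e^{-\beta\mathcal H_\mathrm{R}}/\mathrm{Tr}\,e^{-\beta\mathcal H_\mathrm{R}}$, $U_\mathrm{SR}$ a unitary on $\mathcal H_\mathrm{S}\otimes\mathcal H_\mathrm{R}$ and $\rho^\mathrm{f}_\mathrm{SMR}=(U_\mathrm{SR}\otimes 1_\mathrm{M})(\rho^\mathrm{i}_\mathrm{SM}\otimes\rho^\mathrm{i}_\mathrm{R})(U_\mathrm{SR}\otimes 1_\mathrm{M})^\dagger$. With $Q_\mathrm{R}=\mathrm{Tr}[(\rho^\mathrm{f}_\mathrm{R}-\rho^\mathrm{i}_\mathrm{R})\mathcal H_\mathrm{R}]$, $\Sigma_\mathrm{S}=\mathcal S(\rho^\mathrm{f}_\mathrm{S})-\mathcal S(\rho^\mathrm{i}_\mathrm{S})+\beta Q_\mathrm{R}$, $\Sigma_\mathrm{S|M}=\mathcal S_\mathrm{S|M}(\mathrm f)-\mathcal S_\mathrm{S|M}(\mathrm i)+\beta Q_\mathrm{R}$ and $\Sigma_\mathrm{I}=\Sigma_\mathrm{S|M}-\Sigma_\mathrm{S}$, one has $$\Sigma_\mathrm{I}=\mathcal I_\mathrm{M:R|S}(\mathrm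 f):=\mathcal S(\rho^\mathrm{f}_\mathrm{SR})+\mathcal S(\rho^\mathrm{f}_\mathrm{SM})-\mathcal S(\rho^\mathrm{f}_\mathrm{S})-\mathcal S(\rho^\mathrm{f}_\mathrm{SMR}).$$
   Context: $\mathcal S(\rho)=-\mathrm{Tr}\,\rho\ln\rho$ is the von Neumann entropy; $\mathcal S_\mathrm{S|M}=\mathcal S(\rho_\mathrm{SM})-\mathcal S(\rho_\mathrm{M})$ evaluated on the reduced states at the indicated time; reduced states are partial traces of the global state. *)

theory Defs
  imports Complex_Main "Jordan_Normal_Form.Matrix" "Jordan_Normal_Form.Char_Poly"
    "Jordan_Normal_Form.Schur_Decomposition"
    "HOL-Computational_Algebra.Fundamental_Theorem_Algebra"
begin

text \<open>Finite-dimensional Hilbert spaces are modelled as C^d with complex square matrices.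
  Tensor index conventions: for S (dim a), M (dim b), R (dim c) the basis vector
  |s,m,r> of S(x)M(x)R has index s*(b*c)+m*c+r; |s,m> of S(x)M has index s*b+m;
  |s,r> of S(x)R has index s*c+r.\<close>

definition mtrace :: "complex mat \<Rightarrow> complex" where
  "mtrace A = (\<Sum>i<dim_row A. A $$ (i, i))"

definition hermitian_mat :: "complex mat \<Rightarrow> bool" where
  "hermitian_mat A \<longleftrightarrow> square_mat A \<and> mat_adjoint A = A"

definition unitary_mat :: "complex mat \<Rightarrow> bool" where
  "unitary_mat U \<longleftrightarrow> square_mat U \<and> U * mat_adjoint U = 1\<^sub>m (dim_row U)
      \<and> mat_adjoint U * U = 1\<^sub>m (dim_row U)"

definition psd_mat :: "complex mat \<Rightarrow> bool" where
  "psd_mat A \<longleftrightarrow> hermitian_mat A \<and>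
     (\<forall>v :: nat \<Rightarrow> complex.
        0 \<le> Re (\<Sum>i<dim_row A. \<Sum>j<dim_row A. cnj (v i) * A $$ (i, j) * v j))"

definition density_op :: "nat \<Rightarrow> complex mat \<Rightarrow> bool" where
  "density_op n \<rho> \<longleftrightarrow> \<rho> \<in> carrier_mat n n \<and> psd_mat \<rho> \<and> mtrace \<rho> = 1"

definition kron :: "complex mat \<Rightarrow> complex mat \<Rightarrow> complex mat" where
  "kron A B = mat (dim_row A * dim_row B) (dim_col A * dim_col B)
     (\<lambda>(i, j). A $$ (i div dim_row B, j div dim_col B) * B $$ (i mod dim_row B, j mod dim_col B))"

definition exp_mat :: "complex mat \<Rightarrow> complex mat" where
  "exp_mat A = mat (dim_row A) (dim_row A)
     (\<lambda>(i, j). \<Sum>k. (A ^\<^sub>m k) $$ (i, j) / of_nat (fact k))"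

definition gibbs_state :: "real \<Rightarrow> complex mat \<Rightarrow> complex mat" where
  "gibbs_state \<beta> H = (1 / mtrace (exp_mat ((- complex_of_real \<beta>) \<cdot>\<^sub>m H)))
                        \<cdot>\<^sub>m exp_mat ((- complex_of_real \<beta>) \<cdot>\<^sub>m H)"

text \<open>von Neumann entropy  S(rho) = - Tr rho ln rho = - sum over the eigenvalues lambda
  (with algebraic multiplicity, i.e. the roots of the characteristic polynomial) of
  lambda ln lambda, with the convention 0 ln 0 = 0 (which holds since ln 0 = 0 in Isabelle).\<close>
definition vn_entropy :: "complex mat \<Rightarrow> real" where
  "vn_entropy \<rho> = - (\<Sum>x\<in>#proots (char_poly \<rho>). Re x * ln (Re x))"

text \<open>U_SR (x) 1_M acting on S(x)M(x)R (dims a, b, c).\<close>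
definition ext_SR :: "nat \<Rightarrow> nat \<Rightarrow> nat \<Rightarrow> complex mat \<Rightarrow> complex mat" where
  "ext_SR a b c U = mat (a*b*c) (a*b*c) (\<lambda>(i, j).
      if (i div c) mod b = (j div c) mod b
      then U $$ ((i div (b*c)) * c + i mod c, (j div (b*c)) * c + j mod c)
      else 0)"

definition red_SM :: "nat \<Rightarrow> nat \<Rightarrow> nat \<Rightarrow> complex mat \<Rightarrow> complex mat" where
  "red_SM a b c \<rho> = mat (a*b) (a*b) (\<lambda>(i, j). \<Sum>r<c. \<rho> $$ (i*c + r, j*c + r))"

definition red_SR :: "nat \<Rightarrow> nat \<Rightarrow> nat \<Rightarrow> complex mat \<Rightarrow> complex mat" where
  "red_SR a b c \<rho> = mat (a*c) (a*c) (\<lambda>(i, j).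
      \<Sum>m<b. \<rho> $$ ((i div c)*(b*c) + m*c + i mod c, (j div c)*(b*c) + m*c + j mod c))"

definition red_S :: "nat \<Rightarrow> nat \<Rightarrow> nat \<Rightarrow> complex mat \<Rightarrow> complex mat" where
  "red_S a b c \<rho> = mat a a (\<lambda>(s, s'). \<Sum>k<b*c. \<rho> $$ (s*(b*c) + k, s'*(b*c) + k))"

definition red_M :: "nat \<Rightarrow> nat \<Rightarrow> nat \<Rightarrow> complex mat \<Rightarrow> complex mat" where
  "red_M a b c \<rho> = mat b b (\<lambda>(m, m').
      \<Sum>s<a. \<Sum>r<c. \<rho> $$ (s*(b*c) + m*c + r, s*(b*c) + m'*c + r))"

definition red_R :: "nat \<Rightarrow> nat \<Rightarrow> nat \<Rightarrow> complex mat \<Rightarrow> complex mat" where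
  "red_R a b c \<rho> = mat c c (\<lambda>(r, r'). \<Sum>k<a*b. \<rho> $$ (k*c + r, k*c + r'))"

end

theory Submission
  imports Defs
begin


lemma mat_adjoint_index[simp]: "i < dim_col A \<Longrightarrow> j < dim_row A \<Longrightarrow> mat_adjoint A $$ (i,j) = cnj (A $$ (j,i))"
  by (simp add: mat_adjoint_def mat_of_rows_def)
lemma mat_adjoint_dims[simp]: "dim_row (mat_adjoint A) = dim_col A" "dim_col (mat_adjoint A) = dim_row A"
  by (auto simp: mat_adjoint_def mat_of_rows_def)
lemma mat_adjoint_carrier[simp]: "A \<in> carrier_mat n m \<Longrightarrow> mat_adjoint A \<in> carrier_mat m n"
  by auto

lemma sum_split: "(\<Sum>k<b*c. f k) = (\<Sum>q<b. \<Sum>r<c. f (q*c+r::nat))"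
proof (induction b)
  case 0 then show ?case by simp
next
  case (Suc b)
  have "{..<Suc b * c} = {..<b*c} \<union> {b*c..<b*c+c}" by auto
  then have "(\<Sum>k<Suc b*c. f k) = (\<Sum>k<b*c. f k) + (\<Sum>k\<in>{b*c..<b*c+c}. f k)"
    by (simp add: sum.union_disjoint ivl_disj_int)
  also have "(\<Sum>k\<in>{b*c..<b*c+c}. f k) = (\<Sum>r<c. f (b*c+r))"
  proof -
    have "(\<Sum>k\<in>{0+b*c..<c+b*c}. f k) = (\<Sum>r\<in>{0..<c}. f (r+b*c))"
      by (rule sum.shift_bounds_nat_ivl)
    then show ?thesis by (simp add: lessThan_atLeast0 add.commute)
  qed
  finally show ?case using Suc by simp
qed

lemma divmod_simps[simp]: "r < (c::nat) \<Longrightarrow> (q*c+r) div c = q" "r < (c::nat) \<Longrightarrow> (q*c+r) mod c = r"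
  by auto

lemma idx_lt: "q < b \<Longrightarrow> r < (c::nat) \<Longrightarrow> q*c+r < b*c"
proof -
  assume "q < b" "r < c"
  then have "q*c + r < q*c + c" by simp
  also have "\<dots> = Suc q * c" by simp
  also have "\<dots> \<le> b*c" using \<open>q<b\<close> by (intro mult_le_mono1) simp
  finally show ?thesis .
qed

lemma kron_carrier[simp]: "kron A B \<in> carrier_mat (dim_row A * dim_row B) (dim_col A * dim_col B)"
  by (simp add: kron_def)

lemma kron_index: "i < dim_row A * dim_row B \<Longrightarrow> j < dim_col A * dim_col B \<Longrightarrow>
   kron A B $$ (i,j) = A $$ (i div dim_row B, j div dim_col B) * B $$ (i mod dim_row B, j mod dim_col B)"
  by (simp add: kron_def)

lemma kron_mult:
  assumes A: "A \<in> carrier_mat n n" and C: "C \<in> carrier_mat n n" and B: "B \<in> carrier_mat m m"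
    and D: "D \<in> carrier_mat m m"
  shows "kron A B * kron C D = kron (A*C) (B*D)"
proof (rule eq_matI)
  show "dim_row (kron A B * kron C D) = dim_row (kron (A*C) (B*D))" using A B C D by (simp add: kron_def)
  show "dim_col (kron A B * kron C D) = dim_col (kron (A*C) (B*D))" using A B C D by (simp add: kron_def)
  fix i j assume "i < dim_row (kron (A*C) (B*D))" "j < dim_col (kron (A*C) (B*D))"
  then have i: "i < n*m" and j: "j < n*m" using A B C D by (auto simp: kron_def)
  have m: "0 < m" using i by (cases m) auto
  have id: "i div m < n" "j div m < n" "i mod m < m" "j mod m < m" using i j m
    by (auto simp: less_mult_imp_div_less)
  have "(kron A B * kron C D) $$ (i,j) = (\<Sum>k<n*m. kron A B $$ (i,k) * kron C D $$ (k,j))"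
    using A B C D i j by (simp add: kron_def scalar_prod_def lessThan_atLeast0)
  also have "\<dots> = (\<Sum>q<n. \<Sum>r<m. kron A B $$ (i,q*m+r) * kron C D $$ (q*m+r,j))"
    by (rule sum_split)
  also have "\<dots> = (\<Sum>q<n. \<Sum>r<m. (A $$ (i div m, q) * C $$ (q, j div m)) * (B $$ (i mod m, r) * D $$ (r, j mod m)))"
  proof (intro sum.cong refl)
    fix q r assume q: "q \<in> {..<n}" and r: "r \<in> {..<m}"
    have "q*m+r < n*m" using q r idx_lt by auto
    then show "kron A B $$ (i,q*m+r) * kron C D $$ (q*m+r,j) = (A $$ (i div m, q) * C $$ (q, j div m)) * (B $$ (i mod m, r) * D $$ (r, j mod m))"
      using A B C D i j r by (simp add: kron_index)
  qed
  also have "\<dots> = (\<Sum>q<n. A $$ (i div m, q) * C $$ (q, j div m)) * (\<Sum>r<m. B $$ (i mod m, r) * D $$ (r, j mod m))"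
    by (simp add: sum_product)
  also have "\<dots> = kron (A*C) (B*D) $$ (i,j)"
    using A B C D i j id by (simp add: kron_def scalar_prod_def lessThan_atLeast0)
  finally show "(kron A B * kron C D) $$ (i,j) = kron (A*C) (B*D) $$ (i,j)" .
qed

lemma kron_one: "0 < m \<Longrightarrow> kron (1\<^sub>m n) (1\<^sub>m m) = 1\<^sub>m (n*m)"
  apply (rule eq_matI)
  apply (auto simp: kron_def less_mult_imp_div_less)
  by (metis div_mult_mod_eq)+

lemma mtrace_mult_comm: assumes "A \<in> carrier_mat n m" "B \<in> carrier_mat m n"
  shows "mtrace (A*B) = mtrace (B*A)"
proof -
  have "mtrace (A*B) = (\<Sum>i<n. \<Sum>k<m. A $$ (i,k) * B $$ (k,i))"
    using assms by (simp add: mtrace_def scalar_prod_def lessThan_atLeast0)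
  also have "\<dots> = (\<Sum>k<m. \<Sum>i<n. B $$ (k,i) * A $$ (i,k))"
    by (subst sum.swap) (simp add: mult.commute)
  also have "\<dots> = mtrace (B*A)"
    using assms by (simp add: mtrace_def scalar_prod_def lessThan_atLeast0)
  finally show ?thesis .
qed

lemma mtrace_sim: assumes "similar_mat_wit A T P Q"
  shows "mtrace A = mtrace T"
proof -
  from similar_mat_witD[OF refl assms] obtain n where
    c: "A \<in> carrier_mat n n" "T \<in> carrier_mat n n" "P \<in> carrier_mat n n" "Q \<in> carrier_mat n n"
    and QP: "Q * P = 1\<^sub>m n" and A: "A = P * T * Q" by blast
  have "mtrace A = mtrace (P * (T * Q))" using A c by (simp add: assoc_mult_mat[of P n n T n Q n])
  also have "\<dots> = mtrace ((T * Q) * P)" using c by (intro mtrace_mult_comm) auto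
  also have "(T * Q) * P = T" using c QP by (simp add: assoc_mult_mat[of T n n Q n P n])
  finally show ?thesis .
qed

lemma proots_diag: "proots (\<Prod>a\<leftarrow>xs. [:- a, 1:]) = mset (xs :: complex list)"
proof (induction xs)
  case Nil then show ?case by simp
next
  case (Cons x xs)
  have "(\<Prod>a\<leftarrow>xs. [:- a, 1:]) \<noteq> 0" by (auto simp add: prod_list_zero_iff)
  moreover have "proots [:- x, 1:] = {#x#}" using proots_linear_factor[of "-x"] by simp
  moreover have "(\<Prod>a\<leftarrow>x#xs. [:- a, 1:]) = [:- x, 1:] * (\<Prod>a\<leftarrow>xs. [:- a, 1:])"
    by (simp only: list.map prod_list.Cons)
  moreover have "proots ([:- x, 1:] * (\<Prod>a\<leftarrow>xs. [:- a, 1:])) = proots [:- x, 1:] + proots (\<Prod>a\<leftarrow>xs. [:- a, 1:])"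
    by (rule proots_mult) (use \<open>(\<Prod>a\<leftarrow>xs. [:- a, 1:]) \<noteq> 0\<close> in auto)
  ultimately show ?case using Cons by simp
qed

lemma ent_decomp: assumes "similar_mat_wit A T P Q" "upper_triangular T" "T \<in> carrier_mat n n"
  shows "vn_entropy A = - (\<Sum>i<n. Re (T $$ (i,i)) * ln (Re (T $$ (i,i))))"
proof -
  have "char_poly A = char_poly T" using assms(1) by (intro char_poly_similar) (auto simp: similar_mat_def)
  also have "\<dots> = (\<Prod>a\<leftarrow>diag_mat T. [:- a, 1:])" using assms(2,3) by (intro char_poly_upper_triangular)
  finally have "proots (char_poly A) = mset (diag_mat T)" by (simp add: proots_diag)
  then show ?thesis using assms(3)
    by (simp add: vn_entropy_def diag_mat_def lessThan_atLeast0 sum_unfold_sum_mset multiset.map_comp o_def)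
qed

lemma kron_ut: assumes T: "T \<in> carrier_mat n n" and S: "S \<in> carrier_mat m m"
  and uT: "upper_triangular T" and uS: "upper_triangular S"
  shows "upper_triangular (kron T S)"
  unfolding upper_triangular_def
proof (intro allI impI)
  fix i j assume i: "i < dim_row (kron T S)" and ji: "j < i"
  then have i': "i < n*m" using T S by (simp add: kron_def)
  then have m: "0 < m" by (cases m) auto
  have j': "j < n*m" using i' ji by simp
  have le: "j div m \<le> i div m" using ji by (simp add: div_le_mono)
  have "T $$ (i div m, j div m) = 0 \<or> S $$ (i mod m, j mod m) = 0"
  proof (cases "j div m = i div m")
    case True
    then have "j mod m < i mod m" using ji by (metis div_mult_mod_eq nat_add_left_cancel_less)
    then show ?thesis using uS S m unfolding upper_triangular_def by auto
  next
    case False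
    then have "j div m < i div m" using le by simp
    moreover have "i div m < n" using i' m by (simp add: less_mult_imp_div_less)
    ultimately show ?thesis using uT T unfolding upper_triangular_def by auto
  qed
  then show "kron T S $$ (i,j) = 0" using i' j' T S by (auto simp: kron_index)
qed

definition gooddec :: "complex mat \<Rightarrow> nat \<Rightarrow> complex mat \<Rightarrow> complex mat \<Rightarrow> complex mat \<Rightarrow> bool" where
  "gooddec A n T P Q \<longleftrightarrow> A \<in> carrier_mat n n \<and> similar_mat_wit A T P Q \<and> upper_triangular T \<and> T \<in> carrier_mat n n
     \<and> (\<forall>i<n. Im (T $$ (i,i)) = 0 \<and> 0 \<le> Re (T $$ (i,i))) \<and> (\<Sum>i<n. Re (T $$ (i,i))) = 1"

definition good :: "complex mat \<Rightarrow> nat \<Rightarrow> bool" where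
  "good A n \<longleftrightarrow> (\<exists>T P Q. gooddec A n T P Q)"

lemma xlnx_mult: assumes "0 \<le> (x::real)" "0 \<le> y"
  shows "(x*y) * ln (x*y) = y * (x * ln x) + x * (y * ln y)"
proof (cases "x = 0 \<or> y = 0")
  case True then show ?thesis by auto
next
  case False
  then have "0 < x" "0 < y" using assms by auto
  then show ?thesis by (simp add: ln_mult algebra_simps)
qed

lemma kron_good:
  assumes gA: "good A n" and gB: "good B m" and n: "0 < n" and m: "0 < m"
  shows "vn_entropy (kron A B) = vn_entropy A + vn_entropy B"
proof -
  obtain T P Q where dA: "gooddec A n T P Q" using gA good_def by auto
  obtain S P' Q' where dB: "gooddec B m S P' Q'" using gB good_def by auto
  have A: "A \<in> carrier_mat n n" and T: "T \<in> carrier_mat n n" and uT: "upper_triangular T"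
    and simA: "similar_mat_wit A T P Q" and Tr: "\<And>i. i<n \<Longrightarrow> Im (T $$ (i,i)) = 0 \<and> 0 \<le> Re (T $$ (i,i))"
    and Ts: "(\<Sum>i<n. Re (T $$ (i,i))) = 1" using dA unfolding gooddec_def by auto
  have B: "B \<in> carrier_mat m m" and S: "S \<in> carrier_mat m m" and uS: "upper_triangular S"
    and simB: "similar_mat_wit B S P' Q'" and Sr: "\<And>i. i<m \<Longrightarrow> Im (S $$ (i,i)) = 0 \<and> 0 \<le> Re (S $$ (i,i))"
    and Ss: "(\<Sum>i<m. Re (S $$ (i,i))) = 1" using dB unfolding gooddec_def by auto
  from similar_mat_witD2[OF A simA] have P: "P \<in> carrier_mat n n" and Q: "Q \<in> carrier_mat n n"
    and PQ: "P * Q = 1\<^sub>m n" and QP: "Q * P = 1\<^sub>m n" and Aeq: "A = P * T * Q" by auto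
  from similar_mat_witD2[OF B simB] have P': "P' \<in> carrier_mat m m" and Q': "Q' \<in> carrier_mat m m"
    and PQ': "P' * Q' = 1\<^sub>m m" and QP': "Q' * P' = 1\<^sub>m m" and Beq: "B = P' * S * Q'" by auto
  have c1: "kron P P' \<in> carrier_mat (n*m) (n*m)" "kron Q Q' \<in> carrier_mat (n*m) (n*m)"
    "kron T S \<in> carrier_mat (n*m) (n*m)" "kron A B \<in> carrier_mat (n*m) (n*m)"
    using P P' Q Q' T S A B by (auto simp: kron_def)
  have "kron (P*T) (P'*S) * kron Q Q' = kron (P*T*Q) (P'*S*Q')"
    by (rule kron_mult) (use P P' Q Q' T S in auto)
  then have "kron A B = kron (P*T) (P'*S) * kron Q Q'"
    using Aeq Beq by simp
  also have "kron (P*T) (P'*S) = kron P P' * kron T S"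
    using P P' T S by (simp add: kron_mult)
  finally have e1: "kron A B = kron P P' * kron T S * kron Q Q'" .
  have sim: "similar_mat_wit (kron A B) (kron T S) (kron P P') (kron Q Q')"
    apply (rule similar_mat_witI[of _ _ "n*m"])
    using c1 e1 PQ QP PQ' QP' P P' Q Q' m by (simp_all add: kron_mult kron_one)
  have ut: "upper_triangular (kron T S)" by (rule kron_ut[OF T S uT uS])
  have "vn_entropy (kron A B) = - (\<Sum>k<n*m. Re (kron T S $$ (k,k)) * ln (Re (kron T S $$ (k,k))))"
    by (rule ent_decomp[OF sim ut c1(3)])
  also have "\<dots> = - (\<Sum>q<n. \<Sum>r<m. Re (kron T S $$ (q*m+r,q*m+r)) * ln (Re (kron T S $$ (q*m+r,q*m+r))))"
    by (simp only: sum_split)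
  also have "\<dots> = - (\<Sum>q<n. \<Sum>r<m. Re (S $$ (r,r)) * (Re (T $$ (q,q)) * ln (Re (T $$ (q,q))))
       + Re (T $$ (q,q)) * (Re (S $$ (r,r)) * ln (Re (S $$ (r,r)))))"
  proof -
    have "Re (kron T S $$ (q*m+r,q*m+r)) * ln (Re (kron T S $$ (q*m+r,q*m+r))) =
       Re (S $$ (r,r)) * (Re (T $$ (q,q)) * ln (Re (T $$ (q,q))))
       + Re (T $$ (q,q)) * (Re (S $$ (r,r)) * ln (Re (S $$ (r,r))))" if q: "q < n" and r: "r < m" for q r
    proof -
      have lt: "q*m+r < n*m" using q r idx_lt by auto
      have "Re (kron T S $$ (q*m+r,q*m+r)) = Re (T $$ (q,q)) * Re (S $$ (r,r))"
        using lt T S r Tr[OF q] Sr[OF r] by (simp add: kron_index)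
      then show ?thesis using xlnx_mult Tr[OF q] Sr[OF r] by simp
    qed
    then show ?thesis by simp
  qed
  also have "\<dots> = - ((\<Sum>r<m. Re (S $$ (r,r))) * (\<Sum>q<n. Re (T $$ (q,q)) * ln (Re (T $$ (q,q))))
       + (\<Sum>q<n. Re (T $$ (q,q))) * (\<Sum>r<m. Re (S $$ (r,r)) * ln (Re (S $$ (r,r)))))"
    by (simp add: sum.distrib sum_product sum_distrib_left sum_distrib_right algebra_simps)
     (subst sum.swap, simp add: algebra_simps)
  also have "\<dots> = vn_entropy A + vn_entropy B"
    using Ts Ss ent_decomp[OF simA uT T] ent_decomp[OF simB uS S] by simp
  finally show ?thesis .
qed

lemma herm_entry: assumes "hermitian_mat A" "A \<in> carrier_mat n n" "i < n" "j < n"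
  shows "A $$ (j,i) = cnj (A $$ (i,j))"
proof -
  have "mat_adjoint A $$ (j,i) = A $$ (j,i)" using assms(1) by (simp add: hermitian_mat_def)
  then show ?thesis using assms by simp
qed

lemma eig_props: assumes A: "A \<in> carrier_mat n n" and h: "hermitian_mat A" and ev: "eigenvalue A k"
  shows "Im k = 0" "psd_mat A \<Longrightarrow> 0 \<le> Re k"
proof -
  obtain v where v: "v \<in> carrier_vec n" "v \<noteq> 0\<^sub>v n" "A *\<^sub>v v = k \<cdot>\<^sub>v v"
    using ev A unfolding eigenvalue_def eigenvector_def by auto
  define N where "N = (\<Sum>i<n. cnj (v$i) * v$i)"
  define s where "s = (\<Sum>i<n. \<Sum>j<n. cnj (v$i) * A $$ (i,j) * v$j)"
  obtain i0 where i0: "i0 < n" "v $ i0 \<noteq> 0" using v by (metis dim_vec carrier_vecD eq_vecI index_zero_vec(1) index_zero_vec(2))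
  have Nr: "N = complex_of_real (\<Sum>i<n. (cmod (v$i))^2)"
    unfolding N_def of_real_sum by (intro sum.cong refl) (metis complex_norm_square mult.commute)
  have Npos: "0 < (\<Sum>i<n. (cmod (v$i))^2)"
  proof -
    have "(cmod (v$i0))^2 \<le> (\<Sum>i<n. (cmod (v$i))^2)"
      using i0 by (intro member_le_sum) auto
    moreover have "0 < (cmod (v$i0))^2" using i0 by simp
    ultimately show ?thesis by linarith
  qed
  have "s = (\<Sum>i<n. cnj (v$i) * (A *\<^sub>v v) $ i)"
  proof -
    have "(A *\<^sub>v v) $ i = (\<Sum>j<n. A $$ (i,j) * v$j)" if "i < n" for i
      using A v(1) that by (simp add: scalar_prod_def lessThan_atLeast0)
    then show ?thesis unfolding s_def by (simp add: sum_distrib_left mult.assoc)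
  qed
  also have "\<dots> = k * N" unfolding N_def sum_distrib_left using v(1) by (intro sum.cong refl) (auto simp: v(3) algebra_simps)
  finally have sk: "s = k * N" .
  have "cnj s = (\<Sum>i<n. \<Sum>j<n. v$i * cnj (A $$ (i,j)) * cnj (v$j))" unfolding s_def by simp
  also have "\<dots> = (\<Sum>i<n. \<Sum>j<n. cnj (v$j) * A $$ (j,i) * v$i)"
  proof (intro sum.cong refl)
    fix i j assume "i \<in> {..<n}" "j \<in> {..<n}"
    then have "A $$ (j,i) = cnj (A $$ (i,j))" by (intro herm_entry[OF h A]) auto
    then show "v$i * cnj (A $$ (i,j)) * cnj (v$j) = cnj (v$j) * A $$ (j,i) * v$i" by simp
  qed
  also have "\<dots> = s" unfolding s_def by (rule sum.swap)
  finally have "cnj s = s" .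
  then have ims: "Im s = 0" by (metis Im_complex_div_eq_0 Reals_cnj_iff complex_is_Real_iff div_by_1)
  have Nne: "N \<noteq> 0" unfolding Nr using Npos by (simp only: of_real_eq_0_iff)
  have ks: "k = s / N" using sk Nne by simp
  show "Im k = 0" using ks ims Nr by (simp add: Im_divide_of_real)
  assume "psd_mat A"
  then have "0 \<le> Re s" unfolding psd_mat_def s_def using A by auto
  then show "0 \<le> Re k" using ks Nr Npos by (simp add: Re_divide_of_real)
qed



lemma schur_exists: assumes A: "(A::complex mat) \<in> carrier_mat n n"
  shows "\<exists>T P Q. similar_mat_wit A T P Q \<and> upper_triangular T \<and> T \<in> carrier_mat n n
     \<and> (\<forall>i<n. eigenvalue A (T $$ (i,i)))"
proof -
  obtain as where cp: "char_poly A = (\<Prod>a\<leftarrow>as. [:- a, 1:])" and len: "length as = n"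
    using char_poly_factorized[OF A] by auto
  obtain T P Q where sd: "schur_decomposition A as = (T,P,Q)" by (cases "schur_decomposition A as") auto
  from schur_decomposition[OF A cp sd] have sim: "similar_mat_wit A T P Q" and ut: "upper_triangular T"
    and dg: "diag_mat T = as" by auto
  from similar_mat_witD2[OF A sim] have T: "T \<in> carrier_mat n n" by auto
  have "eigenvalue A (T $$ (i,i))" if i: "i < n" for i
  proof -
    have "T $$ (i,i) \<in> set as" using dg i T by (auto simp: diag_mat_def)
    then have "poly (char_poly A) (T $$ (i,i)) = 0" unfolding cp
      by (auto simp: poly_prod_list prod_list_zero_iff)
    then show ?thesis using eigenvalue_root_char_poly[OF A] by simp
  qed
  then show ?thesis using sim ut T by blast
qed

lemma density_good: assumes d: "density_op n A"
  shows "good A n"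
proof -
  have A: "A \<in> carrier_mat n n" and psd: "psd_mat A" and tr: "mtrace A = 1"
    using d unfolding density_op_def by auto
  have h: "hermitian_mat A" using psd unfolding psd_mat_def by auto
  obtain T P Q where sim: "similar_mat_wit A T P Q" and ut: "upper_triangular T" and T: "T \<in> carrier_mat n n"
    and ev: "\<forall>i<n. eigenvalue A (T $$ (i,i))" using schur_exists[OF A] by blast
  have "mtrace T = 1" using mtrace_sim[OF sim] tr by simp
  then have "(\<Sum>i<n. T $$ (i,i)) = 1" using T by (simp add: mtrace_def)
  then have "(\<Sum>i<n. Re (T $$ (i,i))) = 1" by (metis Re_sum one_complex.sel(1))
  moreover have "\<forall>i<n. Im (T $$ (i,i)) = 0 \<and> 0 \<le> Re (T $$ (i,i))"
    using eig_props[OF A h] ev psd by blast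
  ultimately show ?thesis unfolding good_def gooddec_def using A sim ut T by blast
qed

lemma ut_mult: assumes A: "A \<in> carrier_mat n n" and B: "B \<in> carrier_mat n n"
  and uA: "upper_triangular A" and uB: "upper_triangular B"
  shows "upper_triangular (A*B)" "\<And>i. i < n \<Longrightarrow> (A*B) $$ (i,i) = A $$ (i,i) * B $$ (i,i)"
proof -
  have zA: "A $$ (i,j) = 0" if "j < i" "i < n" for i j using uA A that unfolding upper_triangular_def by auto
  have zB: "B $$ (i,j) = 0" if "j < i" "i < n" for i j using uB B that unfolding upper_triangular_def by auto
  have ent: "(A*B) $$ (i,j) = (\<Sum>l<n. A $$ (i,l) * B $$ (l,j))" if "i < n" "j < n" for i j
    using A B that by (simp add: scalar_prod_def lessThan_atLeast0)
  show "upper_triangular (A*B)" unfolding upper_triangular_def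
  proof (intro allI impI)
    fix i j assume i: "i < dim_row (A*B)" and ji: "j < i"
    then have i': "i < n" using A by simp
    have "A $$ (i,l) * B $$ (l,j) = 0" if "l < n" for l
    proof (cases "l < i")
      case True then show ?thesis using zA[OF True i'] by simp
    next
      case False then show ?thesis using zB[of j l] ji that by simp
    qed
    then show "(A*B) $$ (i,j) = 0" using ent[OF i'] ji i' by simp
  qed
  fix i assume i: "i < n"
  have "(\<Sum>l<n. A $$ (i,l) * B $$ (l,i)) = A $$ (i,i) * B $$ (i,i)"
  proof -
    have "(\<Sum>l<n. A $$ (i,l) * B $$ (l,i)) = A $$ (i,i) * B $$ (i,i) + (\<Sum>l\<in>{..<n}-{i}. A $$ (i,l) * B $$ (l,i))"
      using i by (subst sum.remove[of _ i]) auto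
    also have "(\<Sum>l\<in>{..<n}-{i}. A $$ (i,l) * B $$ (l,i)) = 0"
    proof (rule sum.neutral, intro ballI)
      fix l assume l: "l \<in> {..<n}-{i}"
      show "A $$ (i,l) * B $$ (l,i) = 0"
      proof (cases "l < i")
        case True then show ?thesis using zA[OF True i] by simp
      next
        case False then have "i < l" using l by auto
        then show ?thesis using zB[of i l] l by simp
      qed
    qed
    finally show ?thesis by simp
  qed
  then show "(A*B) $$ (i,i) = A $$ (i,i) * B $$ (i,i)" using ent[OF i i] by simp
qed

lemma ut_pow: fixes T :: "complex mat" assumes T: "T \<in> carrier_mat n n" and uT: "upper_triangular T"
  shows "upper_triangular (T ^\<^sub>m k) \<and> (\<forall>i<n. (T ^\<^sub>m k) $$ (i,i) = (T $$ (i,i)) ^ k)"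
proof (induction k)
  case 0
  then show ?case using T by (auto simp: upper_triangular_def)
next
  case (Suc k)
  then show ?case using ut_mult[of "T ^\<^sub>m k" n T] T uT by (simp add: mult.commute)
qed

lemma pow_bound: assumes X: "X \<in> carrier_mat n n"
  shows "\<forall>i<n. \<forall>j<n. cmod ((X ^\<^sub>m k) $$ (i,j)) \<le> (\<Sum>a<n. \<Sum>b<n. cmod (X $$ (a,b))) ^ k"
proof (induction k)
  case 0
  then show ?case using X by auto
next
  case (Suc k)
  define K where "K = (\<Sum>a<n. \<Sum>b<n. cmod (X $$ (a,b)))"
  have K0: "0 \<le> K" unfolding K_def by (intro sum_nonneg) auto
  show ?case
  proof (intro allI impI)
    fix i j assume i: "i < n" and j: "j < n"
    have "(X ^\<^sub>m Suc k) $$ (i,j) = (\<Sum>l<n. (X ^\<^sub>m k) $$ (i,l) * X $$ (l,j))"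
      using X i j by (simp add: scalar_prod_def lessThan_atLeast0)
    then have "cmod ((X ^\<^sub>m Suc k) $$ (i,j)) \<le> (\<Sum>l<n. cmod ((X ^\<^sub>m k) $$ (i,l)) * cmod (X $$ (l,j)))"
      by (metis (no_types, lifting) norm_mult norm_sum sum.cong)
    also have "\<dots> \<le> (\<Sum>l<n. K ^ k * cmod (X $$ (l,j)))"
      using Suc i unfolding K_def by (intro sum_mono mult_right_mono) auto
    also have "\<dots> = K ^ k * (\<Sum>l<n. cmod (X $$ (l,j)))" by (simp add: sum_distrib_left)
    also have "(\<Sum>l<n. cmod (X $$ (l,j))) \<le> K"
    proof -
      have "(\<Sum>l<n. cmod (X $$ (l,j))) = (\<Sum>l<n. (\<Sum>b\<in>{j}. cmod (X $$ (l,b))))" by simp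
      also have "\<dots> \<le> K" unfolding K_def using j by (intro sum_mono sum_mono2) auto
      finally show ?thesis .
    qed
    then have "K ^ k * (\<Sum>l<n. cmod (X $$ (l,j))) \<le> K ^ k * K"
      using zero_le_power[OF K0] by (intro mult_left_mono)
    finally show "cmod ((X ^\<^sub>m Suc k) $$ (i,j)) \<le> (\<Sum>a<n. \<Sum>b<n. cmod (X $$ (a,b))) ^ Suc k"
      unfolding K_def by (simp add: mult.commute)
  qed
qed

lemma pow_summable: fixes X :: "complex mat" assumes X: "X \<in> carrier_mat n n" and i: "i < n" and j: "j < n"
  shows "summable (\<lambda>k. (X ^\<^sub>m k) $$ (i,j) / of_nat (fact k))"
proof -
  define K where "K = (\<Sum>a<n. \<Sum>b<n. cmod (X $$ (a,b)))"
  show ?thesis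
  proof (rule summable_comparison_test'[where g="\<lambda>k. inverse (fact k) * K ^ k" and N=0])
    show "summable (\<lambda>k. inverse (fact k) * K ^ k)" by (rule summable_exp)
    fix k :: nat
    have "norm ((X ^\<^sub>m k) $$ (i,j) / of_nat (fact k)) = cmod ((X ^\<^sub>m k) $$ (i,j)) / fact k"
      by (simp add: norm_divide)
    also have "\<dots> \<le> K ^ k / fact k" using pow_bound[OF X] i j unfolding K_def
      by (intro divide_right_mono) auto
    finally show "norm ((X ^\<^sub>m k) $$ (i,j) / of_nat (fact k)) \<le> inverse (fact k) * K ^ k"
      by (simp add: divide_inverse mult.commute)
  qed
qed

lemma triple_entry: assumes P: "P \<in> carrier_mat n n" and Y: "Y \<in> carrier_mat n n" and Q: "Q \<in> carrier_mat n n"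
  and i: "i < n" and j: "j < n"
  shows "(P * Y * Q) $$ (i,j) = (\<Sum>a<n. \<Sum>b<n. P $$ (i,a) * Y $$ (a,b) * Q $$ (b,j))"
  using P Y Q i j by (simp add: scalar_prod_def lessThan_atLeast0 sum_distrib_left mult.assoc)

lemma mcn: "A \<in> carrier_mat n n \<Longrightarrow> B \<in> carrier_mat n n \<Longrightarrow> A * B \<in> carrier_mat n n"
  by (rule mult_carrier_mat)

lemma pow_sim: assumes P: "P \<in> carrier_mat n n" and X: "X \<in> carrier_mat n n" and Q: "Q \<in> carrier_mat n n"
  and PQ: "P * Q = 1\<^sub>m n" and QP: "Q * P = 1\<^sub>m n"
  shows "(P * X * Q) ^\<^sub>m k = P * X ^\<^sub>m k * Q"
proof (induction k)
  case 0
  then show ?case using P Q X PQ by simp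
next
  case (Suc k)
  have "(P * X * Q) ^\<^sub>m Suc k = (P * X ^\<^sub>m k * Q) * (P * X * Q)" using Suc by simp
  also have "\<dots> = P * X ^\<^sub>m k * (Q * P) * X * Q"
    using P X Q by (simp add: assoc_mult_mat[of _ n n _ n _ n] mcn)
  also have "\<dots> = P * X ^\<^sub>m Suc k * Q"
    using P X Q QP by (simp add: assoc_mult_mat[of _ n n _ n _ n] mcn)
  finally show ?case .
qed

lemma exp_sim: fixes X :: "complex mat"
  assumes P: "P \<in> carrier_mat n n" and X: "X \<in> carrier_mat n n" and Q: "Q \<in> carrier_mat n n"
  and PQ: "P * Q = 1\<^sub>m n" and QP: "Q * P = 1\<^sub>m n"
  shows "exp_mat (P * X * Q) = P * exp_mat X * Q"
proof (rule eq_matI)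
  have ec: "exp_mat X \<in> carrier_mat n n" using X by (simp add: exp_mat_def)
  show "dim_row (exp_mat (P * X * Q)) = dim_row (P * exp_mat X * Q)" using P by (simp add: exp_mat_def)
  show "dim_col (exp_mat (P * X * Q)) = dim_col (P * exp_mat X * Q)" using P Q by (simp add: exp_mat_def)
  fix i j assume "i < dim_row (P * exp_mat X * Q)" "j < dim_col (P * exp_mat X * Q)"
  then have i: "i < n" and j: "j < n" using P Q by auto
  have "exp_mat (P * X * Q) $$ (i,j) = (\<Sum>k. ((P * X * Q) ^\<^sub>m k) $$ (i,j) / of_nat (fact k))"
    using P i j by (simp add: exp_mat_def)
  also have "\<dots> = (\<Sum>k. \<Sum>a<n. \<Sum>b<n. P $$ (i,a) * ((X ^\<^sub>m k) $$ (a,b) / of_nat (fact k)) * Q $$ (b,j))"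
    by (simp add: pow_sim[OF P X Q PQ QP] triple_entry[OF P _ Q i j] X sum_divide_distrib)
  also have "\<dots> = (\<Sum>a<n. \<Sum>b<n. (\<Sum>k. P $$ (i,a) * ((X ^\<^sub>m k) $$ (a,b) / of_nat (fact k)) * Q $$ (b,j)))"
  proof -
    define f where "f = (\<lambda>a b k. P $$ (i,a) * ((X ^\<^sub>m k) $$ (a,b) / of_nat (fact k)) * Q $$ (b,j))"
    have sf: "summable (f a b)" if "a < n" "b < n" for a b
      unfolding f_def by (intro summable_mult2 summable_mult pow_summable[OF X] that)
    have "(\<Sum>k. \<Sum>a<n. \<Sum>b<n. f a b k) = (\<Sum>a<n. \<Sum>k. \<Sum>b<n. f a b k)"
      by (rule suminf_sum) (auto intro!: summable_sum sf)
    also have "\<dots> = (\<Sum>a<n. \<Sum>b<n. \<Sum>k. f a b k)"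
      by (intro sum.cong refl suminf_sum) (auto intro!: sf)
    finally show ?thesis unfolding f_def .
  qed
  also have "\<dots> = (\<Sum>a<n. \<Sum>b<n. P $$ (i,a) * exp_mat X $$ (a,b) * Q $$ (b,j))"
  proof (intro sum.cong refl)
    fix a b assume a: "a \<in> {..<n}" and b: "b \<in> {..<n}"
    have sm: "summable (\<lambda>k. (X ^\<^sub>m k) $$ (a,b) / of_nat (fact k))" using pow_summable[OF X] a b by auto
    have "(\<Sum>k. P $$ (i,a) * ((X ^\<^sub>m k) $$ (a,b) / of_nat (fact k)) * Q $$ (b,j))
       = (\<Sum>k. P $$ (i,a) * ((X ^\<^sub>m k) $$ (a,b) / of_nat (fact k))) * Q $$ (b,j)"
      by (rule suminf_mult2[symmetric]) (intro summable_mult sm)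
    also have "\<dots> = P $$ (i,a) * (\<Sum>k. (X ^\<^sub>m k) $$ (a,b) / of_nat (fact k)) * Q $$ (b,j)"
      using suminf_mult[OF sm] by simp
    also have "\<dots> = P $$ (i,a) * exp_mat X $$ (a,b) * Q $$ (b,j)" using a b X by (simp add: exp_mat_def)
    finally show "(\<Sum>k. P $$ (i,a) * ((X ^\<^sub>m k) $$ (a,b) / of_nat (fact k)) * Q $$ (b,j)) = P $$ (i,a) * exp_mat X $$ (a,b) * Q $$ (b,j)" .
  qed
  also have "\<dots> = (P * exp_mat X * Q) $$ (i,j)" by (simp add: triple_entry[OF P ec Q i j])
  finally show "exp_mat (P * X * Q) $$ (i,j) = (P * exp_mat X * Q) $$ (i,j)" .
qed



lemma exp_series_c: "(\<lambda>k. (z::complex) ^ k / of_nat (fact k)) sums exp z"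
proof -
  have "(\<lambda>k. z ^ k /\<^sub>R fact k) sums exp z" by (rule exp_converges)
  moreover have "(\<lambda>k. z ^ k /\<^sub>R fact k) = (\<lambda>k. z ^ k / of_nat (fact k))"
    by (auto simp: scaleR_conv_of_real divide_inverse mult.commute)
  ultimately show ?thesis by simp
qed

lemma exp_ut: fixes X :: "complex mat" assumes X: "X \<in> carrier_mat n n" and uX: "upper_triangular X"
  shows "upper_triangular (exp_mat X)" "\<And>i. i < n \<Longrightarrow> exp_mat X $$ (i,i) = exp (X $$ (i,i))"
proof -
  show "upper_triangular (exp_mat X)" unfolding upper_triangular_def
  proof (intro allI impI)
    fix i j assume i: "i < dim_row (exp_mat X)" and ji: "j < i"
    then have i': "i < n" using X by (simp add: exp_mat_def)
    have "(X ^\<^sub>m k) $$ (i,j) = 0" for k using ut_pow[OF X uX, of k] i' ji X unfolding upper_triangular_def by auto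
    then show "exp_mat X $$ (i,j) = 0" using i' ji X by (simp add: exp_mat_def)
  qed
  fix i assume i: "i < n"
  have "exp_mat X $$ (i,i) = (\<Sum>k. (X $$ (i,i)) ^ k / of_nat (fact k))"
    using ut_pow[OF X uX] i X by (simp add: exp_mat_def)
  also have "\<dots> = exp (X $$ (i,i))" using exp_series_c sums_unique by metis
  finally show "exp_mat X $$ (i,i) = exp (X $$ (i,i))" .
qed

lemma gibbs_good: assumes H: "H \<in> carrier_mat n n" and h: "hermitian_mat H" and n: "0 < n"
  shows "good (gibbs_state \<beta> H) n"
proof -
  obtain T P Q where sim: "similar_mat_wit H T P Q" and uT: "upper_triangular T" and T: "T \<in> carrier_mat n n"
    and ev: "\<forall>i<n. eigenvalue H (T $$ (i,i))" using schur_exists[OF H] by blast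
  from similar_mat_witD2[OF H sim] have P: "P \<in> carrier_mat n n" and Q: "Q \<in> carrier_mat n n"
    and PQ: "P * Q = 1\<^sub>m n" and QP: "Q * P = 1\<^sub>m n" and Heq: "H = P * T * Q" by auto
  define t where "t = (\<lambda>i. Re (T $$ (i,i)))"
  have Tt: "T $$ (i,i) = complex_of_real (t i)" if "i < n" for i
    using eig_props(1)[OF H h] ev that unfolding t_def by (simp add: complex_eq_iff)
  define c where "c = - complex_of_real \<beta>"
  define X where "X = c \<cdot>\<^sub>m T"
  have X: "X \<in> carrier_mat n n" using T by (simp add: X_def)
  have uX: "upper_triangular X" using uT T unfolding X_def upper_triangular_def by auto
  have Xd: "X $$ (i,i) = complex_of_real (- \<beta> * t i)" if "i < n" for i
    using Tt[OF that] T that by (simp add: X_def c_def)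
  define E where "E = exp_mat X"
  have E: "E \<in> carrier_mat n n" using X by (simp add: E_def exp_mat_def)
  have uE: "upper_triangular E" using exp_ut[OF X uX] by (simp add: E_def)
  have Ed: "E $$ (i,i) = complex_of_real (exp (- \<beta> * t i))" if "i < n" for i
    using exp_ut(2)[OF X uX that] Xd[OF that] unfolding E_def by (metis exp_of_real)
  have cH: "c \<cdot>\<^sub>m H = P * X * Q"
    using P T Q unfolding Heq X_def by (simp add: mult_smult_distrib[of _ n n _ n] mult_smult_assoc_mat[of _ n n _ n] assoc_mult_mat[of _ n n _ n _ n] mcn)
  have eH: "exp_mat (c \<cdot>\<^sub>m H) = P * E * Q" unfolding cH E_def by (rule exp_sim[OF P X Q PQ QP])
  define Zr where "Zr = (\<Sum>i<n. exp (- \<beta> * t i))"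
  have Zpos: "0 < Zr" unfolding Zr_def using n by (intro sum_pos) auto
  have "mtrace (exp_mat (c \<cdot>\<^sub>m H)) = mtrace E"
    unfolding eH by (rule mtrace_sim[OF similar_mat_witI[OF PQ QP refl]]) (use P E Q in auto)
  also have "\<dots> = complex_of_real Zr" using E Ed by (simp add: mtrace_def Zr_def)
  finally have Z: "mtrace (exp_mat (c \<cdot>\<^sub>m H)) = complex_of_real Zr" .
  define T' where "T' = (1 / complex_of_real Zr) \<cdot>\<^sub>m E"
  have T': "T' \<in> carrier_mat n n" using E by (simp add: T'_def)
  have g: "gibbs_state \<beta> H = P * T' * Q"
    unfolding gibbs_state_def c_def[symmetric] Z eH T'_def
    using P E Q Z[unfolded eH] by (simp add: mult_smult_distrib[of _ n n _ n] mult_smult_assoc_mat[of _ n n _ n] assoc_mult_mat[of _ n n _ n _ n] mcn)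
  have gc: "gibbs_state \<beta> H \<in> carrier_mat n n" using g P T' Q by auto
  have sim': "similar_mat_wit (gibbs_state \<beta> H) T' P Q"
    by (intro similar_mat_witI[of _ _ n] PQ QP g gc T' P Q)
  have uT': "upper_triangular T'" using uE E unfolding T'_def upper_triangular_def by auto
  have T'd: "T' $$ (i,i) = complex_of_real (exp (- \<beta> * t i) / Zr)" if "i < n" for i
    using Ed[OF that] E that by (simp add: T'_def)
  have "(\<Sum>i<n. Re (T' $$ (i,i))) = (\<Sum>i<n. exp (- \<beta> * t i) / Zr)" using T'd by simp
  also have "\<dots> = 1" using Zpos by (simp add: Zr_def sum_divide_distrib[symmetric])
  finally have s1: "(\<Sum>i<n. Re (T' $$ (i,i))) = 1" .
  have "\<forall>i<n. Im (T' $$ (i,i)) = 0 \<and> 0 \<le> Re (T' $$ (i,i))" using T'd Zpos by simp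
  then show ?thesis unfolding good_def gooddec_def using gc sim' uT' T' s1 by blast
qed



definition ix2 :: "nat \<Rightarrow> nat \<Rightarrow> nat \<Rightarrow> nat" where "ix2 c s r = s*c + r"
definition ix3 :: "nat \<Rightarrow> nat \<Rightarrow> nat \<Rightarrow> nat \<Rightarrow> nat \<Rightarrow> nat" where "ix3 b c s m r = s*(b*c) + m*c + r"

lemma ix2_props: assumes "s < a" "r < (c::nat)"
  shows "ix2 c s r < a*c" "ix2 c s r div c = s" "ix2 c s r mod c = r"
  using assms idx_lt[of s a r c] by (auto simp: ix2_def)

lemma ix3_ix2: "ix3 b c s m r = ix2 c (ix2 b s m) r"
  by (simp add: ix2_def ix3_def algebra_simps)

lemma ix3_S: "ix3 b c s m r = s*(b*c) + ix2 c m r"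
  by (simp add: ix2_def ix3_def algebra_simps)

lemma ix3_props: assumes "s < a" "m < b" "r < (c::nat)"
  shows "ix3 b c s m r < a*b*c" "ix3 b c s m r div (b*c) = s" "ix3 b c s m r mod c = r"
    "(ix3 b c s m r div c) mod b = m" "ix3 b c s m r div c = ix2 b s m"
proof -
  have a: "ix2 b s m < a*b" using ix2_props assms by auto
  show "ix3 b c s m r < a*b*c" unfolding ix3_ix2 using ix2_props[OF a assms(3)] by simp
  show "ix3 b c s m r mod c = r" unfolding ix3_ix2 using ix2_props[OF a assms(3)] by simp
  show d: "ix3 b c s m r div c = ix2 b s m" unfolding ix3_ix2 using ix2_props[OF a assms(3)] by simp
  show "(ix3 b c s m r div c) mod b = m" unfolding d using ix2_props[OF assms(1,2)] by simp
  have "ix3 b c s m r div (b*c) = (ix3 b c s m r div c) div b" by (metis div_mult2_eq mult.commute)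
  then show "ix3 b c s m r div (b*c) = s" unfolding d using ix2_props[OF assms(1,2)] by simp
qed

lemma sum2: "(\<Sum>k<a*c. f k) = (\<Sum>s<a. \<Sum>r<c. f (ix2 c s r))"
  unfolding ix2_def by (rule sum_split)

lemma sum3: "(\<Sum>k<a*b*c. f k) = (\<Sum>s<a. \<Sum>m<b. \<Sum>r<c. f (ix3 b c s m r))"
proof -
  have "(\<Sum>k<a*b*c. f k) = (\<Sum>k<a*(b*c). f k)" by (simp add: mult.assoc)
  also have "\<dots> = (\<Sum>s<a. \<Sum>k<b*c. f (s*(b*c) + k))" by (rule sum_split)
  also have "\<dots> = (\<Sum>s<a. \<Sum>m<b. \<Sum>r<c. f (s*(b*c) + (m*c+r)))" by (simp only: sum_split)
  finally show ?thesis by (simp add: ix3_def add.assoc)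
qed

lemma ex2: assumes "i < a*(c::nat)" shows "\<exists>s<a. \<exists>r<c. i = ix2 c s r"
proof -
  have c: "0 < c" using assms by (cases c) auto
  show ?thesis using assms c
    by (intro exI[of _ "i div c"] conjI exI[of _ "i mod c"])
       (auto simp: ix2_def less_mult_imp_div_less)
qed

lemma ex3: assumes "i < a*b*(c::nat)" shows "\<exists>s<a. \<exists>m<b. \<exists>r<c. i = ix3 b c s m r"
proof -
  obtain q r where q: "q < a*b" and r: "r < c" and i: "i = ix2 c q r" using ex2[of i "a*b" c] assms by auto
  obtain s m where s: "s < a" and m: "m < b" and q': "q = ix2 b s m" using ex2[OF q] by auto
  show ?thesis using s m r i q' ix3_ix2 by metis
qed

lemma red_SR_entry: assumes "s < a" "r < c" "s' < a" "r' < c"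
  shows "red_SR a b c \<rho> $$ (ix2 c s r, ix2 c s' r') = (\<Sum>m<b. \<rho> $$ (ix3 b c s m r, ix3 b c s' m r'))"
  using assms ix2_props[of s a r c] ix2_props[of s' a r' c] by (simp add: red_SR_def ix3_def)

lemma red_SM_entry: assumes "s < a" "m < b" "s' < a" "m' < b"
  shows "red_SM a b c \<rho> $$ (ix2 b s m, ix2 b s' m') = (\<Sum>r<c. \<rho> $$ (ix3 b c s m r, ix3 b c s' m' r))"
  using assms ix2_props[of s a m b] ix2_props[of s' a m' b] by (simp add: red_SM_def ix3_ix2 ix2_def[of c])

lemma red_S_entry: assumes "s < a" "s' < a"
  shows "red_S a b c \<rho> $$ (s, s') = (\<Sum>m<b. \<Sum>r<c. \<rho> $$ (ix3 b c s m r, ix3 b c s' m r))"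
  using assms by (simp add: red_S_def ix3_S sum2)

lemma red_M_entry: assumes "m < b" "m' < b"
  shows "red_M a b c \<rho> $$ (m, m') = (\<Sum>s<a. \<Sum>r<c. \<rho> $$ (ix3 b c s m r, ix3 b c s m' r))"
  using assms by (simp add: red_M_def ix3_def)

lemma kron_entry3: assumes "\<rho> \<in> carrier_mat (a*b) (a*b)" "R \<in> carrier_mat c c"
  "s < a" "m < b" "r < c" "s' < a" "m' < b" "r' < c"
  shows "kron \<rho> R $$ (ix3 b c s m r, ix3 b c s' m' r') = \<rho> $$ (ix2 b s m, ix2 b s' m') * R $$ (r, r')"
proof -
  have "ix2 b s m < a*b" "ix2 b s' m' < a*b" using assms ix2_props by auto
  then show ?thesis using assms ix2_props[of _ "a*b" _ c] unfolding ix3_ix2 by (simp add: kron_index)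
qed

lemma W_entry: assumes "s < a" "m < b" "r < c" "s' < a" "m' < b" "r' < c"
  shows "ext_SR a b c U $$ (ix3 b c s m r, ix3 b c s' m' r') = (if m = m' then U $$ (ix2 c s r, ix2 c s' r') else 0)"
proof -
  note p1 = ix3_props[of s a m b r c] and p2 = ix3_props[of s' a m' b r' c]
  have "ext_SR a b c U $$ (ix3 b c s m r, ix3 b c s' m' r') =
    (if (ix3 b c s m r div c) mod b = (ix3 b c s' m' r' div c) mod b
     then U $$ ((ix3 b c s m r div (b*c)) * c + ix3 b c s m r mod c, (ix3 b c s' m' r' div (b*c)) * c + ix3 b c s' m' r' mod c)
     else 0)" using p1(1) p2(1) assms by (simp add: ext_SR_def)
  also have "\<dots> = (if m = m' then U $$ (ix2 c s r, ix2 c s' r') else 0)"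
    using p1 p2 assms by (simp only: ix2_def)
  finally show ?thesis .
qed



lemma eq_mat3: assumes A: "A \<in> carrier_mat (a*b*c) (a*b*c)" and B: "B \<in> carrier_mat (a*b*c) (a*b*c)"
  and e: "\<And>s m r s' m' r'. s < a \<Longrightarrow> m < b \<Longrightarrow> r < c \<Longrightarrow> s' < a \<Longrightarrow> m' < b \<Longrightarrow> r' < c \<Longrightarrow>
     A $$ (ix3 b c s m r, ix3 b c s' m' r') = B $$ (ix3 b c s m r, ix3 b c s' m' r')"
  shows "A = B"
proof (rule eq_matI)
  fix i j assume "i < dim_row B" "j < dim_col B"
  then have "i < a*b*c" "j < a*b*c" using B by auto
  then show "A $$ (i,j) = B $$ (i,j)" using ex3 e by metis
qed (use A B in auto)

lemma eq_mat2: assumes A: "A \<in> carrier_mat (a*c) (a*c)" and B: "B \<in> carrier_mat (a*c) (a*c)"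
  and e: "\<And>s r s' r'. s < a \<Longrightarrow> r < c \<Longrightarrow> s' < a \<Longrightarrow> r' < c \<Longrightarrow>
     A $$ (ix2 c s r, ix2 c s' r') = B $$ (ix2 c s r, ix2 c s' r')"
  shows "A = B"
proof (rule eq_matI)
  fix i j assume "i < dim_row B" "j < dim_col B"
  then have "i < a*c" "j < a*c" using B by auto
  then show "A $$ (i,j) = B $$ (i,j)" using ex2 e by metis
qed (use A B in auto)

lemma mult_entry3: assumes "A \<in> carrier_mat (a*b*c) (a*b*c)" "B \<in> carrier_mat (a*b*c) (a*b*c)"
  "i < a*b*c" "j < a*b*c"
  shows "(A*B) $$ (i,j) = (\<Sum>s<a. \<Sum>m<b. \<Sum>r<c. A $$ (i, ix3 b c s m r) * B $$ (ix3 b c s m r, j))"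
  using assms by (simp add: scalar_prod_def lessThan_atLeast0[symmetric] sum3)

lemma mult_entry2: assumes "A \<in> carrier_mat (a*c) (a*c)" "B \<in> carrier_mat (a*c) (a*c)"
  "i < a*c" "j < a*c"
  shows "(A*B) $$ (i,j) = (\<Sum>s<a. \<Sum>r<c. A $$ (i, ix2 c s r) * B $$ (ix2 c s r, j))"
  using assms by (simp add: scalar_prod_def lessThan_atLeast0[symmetric] sum2)

lemma ix2_inj: assumes "s < a" "r < c" "s' < a" "r' < (c::nat)"
  shows "(ix2 c s r = ix2 c s' r') = (s = s' \<and> r = r')"
  using ix2_props[OF assms(1,2)] ix2_props[OF assms(3,4)] by metis

lemma ix3_inj: assumes "s < a" "m < b" "r < c" "s' < a" "m' < b" "r' < (c::nat)"
  shows "(ix3 b c s m r = ix3 b c s' m' r') = (s = s' \<and> m = m' \<and> r = r')"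
  using ix3_props[OF assms(1,2,3)] ix3_props[OF assms(4,5,6)] by metis

lemma sum_ifP: "(\<Sum>x\<in>A. if P then f x else 0) = (if P then sum f A else 0)"
  by auto

lemma W_carrier: "ext_SR a b c U \<in> carrier_mat (a*b*c) (a*b*c)"
  by (simp add: ext_SR_def)

lemma W_unitary: assumes U: "U \<in> carrier_mat (a*c) (a*c)" and UU: "U * mat_adjoint U = 1\<^sub>m (a*c)"
  and UU': "mat_adjoint U * U = 1\<^sub>m (a*c)"
  shows "ext_SR a b c U * mat_adjoint (ext_SR a b c U) = 1\<^sub>m (a*b*c)"
    "mat_adjoint (ext_SR a b c U) * ext_SR a b c U = 1\<^sub>m (a*b*c)"
proof -
  let ?W = "ext_SR a b c U"
  have W: "?W \<in> carrier_mat (a*b*c) (a*b*c)" by (rule W_carrier)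
  have Wa: "mat_adjoint ?W \<in> carrier_mat (a*b*c) (a*b*c)" using W by simp
  show "?W * mat_adjoint ?W = 1\<^sub>m (a*b*c)"
  proof (rule eq_mat3[of _ a b c])
    fix s m r s' m' r' assume as: "s < a" "m < b" "r < c" "s' < a" "m' < b" "r' < c"
    note p = ix3_props[OF as(1-3)] ix3_props[OF as(4-6)]
    have "(?W * mat_adjoint ?W) $$ (ix3 b c s m r, ix3 b c s' m' r')
      = (\<Sum>s1<a. \<Sum>m1<b. \<Sum>r1<c. (if m = m1 then U $$ (ix2 c s r, ix2 c s1 r1) else 0) *
            cnj (if m' = m1 then U $$ (ix2 c s' r', ix2 c s1 r1) else 0))"
    proof -
      have "(?W * mat_adjoint ?W) $$ (ix3 b c s m r, ix3 b c s' m' r') = (\<Sum>s1<a. \<Sum>m1<b. \<Sum>r1<c.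
          ?W $$ (ix3 b c s m r, ix3 b c s1 m1 r1) * mat_adjoint ?W $$ (ix3 b c s1 m1 r1, ix3 b c s' m' r'))"
        by (rule mult_entry3[OF W Wa]) (use p in auto)
      also have "\<dots> = (\<Sum>s1<a. \<Sum>m1<b. \<Sum>r1<c. (if m = m1 then U $$ (ix2 c s r, ix2 c s1 r1) else 0) *
            cnj (if m' = m1 then U $$ (ix2 c s' r', ix2 c s1 r1) else 0))"
      proof (intro sum.cong refl)
        fix s1 m1 r1 assume b: "s1 \<in> {..<a}" "m1 \<in> {..<b}" "r1 \<in> {..<c}"
        then have "ix3 b c s1 m1 r1 < a*b*c" using ix3_props by auto
        then show "?W $$ (ix3 b c s m r, ix3 b c s1 m1 r1) * mat_adjoint ?W $$ (ix3 b c s1 m1 r1, ix3 b c s' m' r') =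
          (if m = m1 then U $$ (ix2 c s r, ix2 c s1 r1) else 0) * cnj (if m' = m1 then U $$ (ix2 c s' r', ix2 c s1 r1) else 0)"
          using W p b as by (simp add: W_entry del: if_distrib)
      qed
      finally show ?thesis .
    qed
    also have "\<dots> = (if m = m' then (\<Sum>s1<a. \<Sum>r1<c. U $$ (ix2 c s r, ix2 c s1 r1) * cnj (U $$ (ix2 c s' r', ix2 c s1 r1))) else 0)"
    proof -
      have "(if m = m1 then U $$ (ix2 c s r, ix2 c s1 r1) else 0) * cnj (if m' = m1 then U $$ (ix2 c s' r', ix2 c s1 r1) else 0)
        = (if m1 = m then (if m = m' then U $$ (ix2 c s r, ix2 c s1 r1) * cnj (U $$ (ix2 c s' r', ix2 c s1 r1)) else 0) else 0)"
        for s1 m1 r1 by auto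
      then have "(\<Sum>s1<a. \<Sum>m1<b. \<Sum>r1<c. (if m = m1 then U $$ (ix2 c s r, ix2 c s1 r1) else 0) *
            cnj (if m' = m1 then U $$ (ix2 c s' r', ix2 c s1 r1) else 0)) =
          (\<Sum>s1<a. \<Sum>m1<b. if m1 = m then (\<Sum>r1<c. (if m = m' then U $$ (ix2 c s r, ix2 c s1 r1) * cnj (U $$ (ix2 c s' r', ix2 c s1 r1)) else 0)) else 0)"
        by (simp only: sum_ifP)
      also have "\<dots> = (\<Sum>s1<a. \<Sum>r1<c. (if m = m' then U $$ (ix2 c s r, ix2 c s1 r1) * cnj (U $$ (ix2 c s' r', ix2 c s1 r1)) else 0))"
        using as by simp
      finally show ?thesis by (auto simp: sum.neutral)
    qed
    also have "\<dots> = (if m = m' then (U * mat_adjoint U) $$ (ix2 c s r, ix2 c s' r') else 0)"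
    proof -
      have i: "ix2 c s r < a*c" "ix2 c s' r' < a*c" using as ix2_props by auto
      have "(U * mat_adjoint U) $$ (ix2 c s r, ix2 c s' r') = (\<Sum>s1<a. \<Sum>r1<c. U $$ (ix2 c s r, ix2 c s1 r1) * mat_adjoint U $$ (ix2 c s1 r1, ix2 c s' r'))"
        by (rule mult_entry2) (use U i in auto)
      also have "\<dots> = (\<Sum>s1<a. \<Sum>r1<c. U $$ (ix2 c s r, ix2 c s1 r1) * cnj (U $$ (ix2 c s' r', ix2 c s1 r1)))"
        using U i ix2_props by (intro sum.cong refl) auto
      finally show ?thesis by simp
    qed
    also have "\<dots> = 1\<^sub>m (a*b*c) $$ (ix3 b c s m r, ix3 b c s' m' r')"
      using as UU p ix2_props ix2_inj ix3_inj by auto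
    finally show "(?W * mat_adjoint ?W) $$ (ix3 b c s m r, ix3 b c s' m' r') = 1\<^sub>m (a*b*c) $$ (ix3 b c s m r, ix3 b c s' m' r')" .
  qed (use W in auto)
  then show "mat_adjoint ?W * ?W = 1\<^sub>m (a*b*c)"
    by (rule mat_mult_left_right_inverse[OF W Wa])
qed



definition J :: "nat \<Rightarrow> nat \<Rightarrow> nat \<Rightarrow> nat \<Rightarrow> nat" where
  "J b c m k = ix3 b c (k div c) m (k mod c)"

lemma J_ix2: "r < c \<Longrightarrow> J b c m (ix2 c s r) = ix3 b c s m r"
  by (simp add: J_def ix2_def)

lemma J_props: assumes "k < a*c" "m < b"
  shows "J b c m k < a*b*c" "\<exists>s<a. \<exists>r<c. k = ix2 c s r \<and> J b c m k = ix3 b c s m r"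
proof -
  obtain s r where sr: "s < a" "r < c" "k = ix2 c s r" using ex2[OF assms(1)] by auto
  then show "\<exists>s<a. \<exists>r<c. k = ix2 c s r \<and> J b c m k = ix3 b c s m r" using J_ix2 by auto
  then show "J b c m k < a*b*c" using ix3_props assms by auto
qed

lemma sumJ: "(\<Sum>i<a*b*c. f i) = (\<Sum>m<b. \<Sum>k<a*c. f (J b c m k))"
proof -
  have "(\<Sum>i<a*b*c. f i) = (\<Sum>s<a. \<Sum>m<b. \<Sum>r<c. f (ix3 b c s m r))" by (rule sum3)
  also have "\<dots> = (\<Sum>m<b. \<Sum>s<a. \<Sum>r<c. f (ix3 b c s m r))" by (rule sum.swap)
  also have "\<dots> = (\<Sum>m<b. \<Sum>s<a. \<Sum>r<c. f (J b c m (ix2 c s r)))" by (simp add: J_ix2)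
  also have "\<dots> = (\<Sum>m<b. \<Sum>k<a*c. f (J b c m k))" by (simp add: sum2)
  finally show ?thesis .
qed

lemma J_inj: assumes "k < a*c" "m < b" "k' < a*c" "m' < b"
  shows "(J b c m k = J b c m' k') = (m = m' \<and> k = k')"
proof -
  obtain s r where 1: "s<a" "r<c" "k = ix2 c s r" "J b c m k = ix3 b c s m r" using J_props(2)[OF assms(1,2)] by auto
  obtain s' r' where 2: "s'<a" "r'<c" "k' = ix2 c s' r'" "J b c m' k' = ix3 b c s' m' r'" using J_props(2)[OF assms(3,4)] by auto
  show ?thesis using 1 2 ix3_inj[of s a m b r c s' m' r'] ix2_inj[of s a r c s' r'] assms by auto
qed

lemma W_J: assumes "k < a*c" "m < b" "k' < a*c" "m' < b"
  shows "ext_SR a b c U $$ (J b c m k, J b c m' k') = (if m = m' then U $$ (k, k') else 0)"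
proof -
  obtain s r where 1: "s<a" "r<c" "k = ix2 c s r" "J b c m k = ix3 b c s m r" using J_props(2)[OF assms(1,2)] by auto
  obtain s' r' where 2: "s'<a" "r'<c" "k' = ix2 c s' r'" "J b c m' k' = ix3 b c s' m' r'" using J_props(2)[OF assms(3,4)] by auto
  show ?thesis using 1 2 W_entry[of s a m b r c s' m' r' U] assms by simp
qed

lemma eq_matJ: assumes A: "A \<in> carrier_mat (a*b*c) (a*b*c)" and B: "B \<in> carrier_mat (a*b*c) (a*b*c)"
  and e: "\<And>m k m' k'. m < b \<Longrightarrow> k < a*c \<Longrightarrow> m' < b \<Longrightarrow> k' < a*c \<Longrightarrow>
     A $$ (J b c m k, J b c m' k') = B $$ (J b c m k, J b c m' k')"
  shows "A = B"
proof (rule eq_mat3[OF A B])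
  fix s m r s' m' r' assume as: "s < a" "m < b" "r < c" "s' < a" "m' < b" "r' < c"
  then show "A $$ (ix3 b c s m r, ix3 b c s' m' r') = B $$ (ix3 b c s m r, ix3 b c s' m' r')"
    using e[of m "ix2 c s r" m' "ix2 c s' r'"] ix2_props J_ix2 by metis
qed

lemma red_SR_J: assumes "k < a*c" "k' < a*c"
  shows "red_SR a b c X $$ (k,k') = (\<Sum>m<b. X $$ (J b c m k, J b c m k'))"
  using assms by (simp add: red_SR_def J_def ix3_def)

lemma red_M_J: assumes "m < b" "m' < b"
  shows "red_M a b c X $$ (m,m') = (\<Sum>k<a*c. X $$ (J b c m k, J b c m' k))"
  using assms by (simp add: red_M_entry sum2 J_ix2)

lemma collapseL: assumes k: "k < a*c" and m: "m < b"
  shows "(\<Sum>i<a*b*c. ext_SR a b c U $$ (J b c m k, i) * g i) = (\<Sum>k1<a*c. U $$ (k,k1) * g (J b c m k1))"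
proof -
  have "(\<Sum>i<a*b*c. ext_SR a b c U $$ (J b c m k, i) * g i) =
     (\<Sum>m1<b. \<Sum>k1<a*c. ext_SR a b c U $$ (J b c m k, J b c m1 k1) * g (J b c m1 k1))" by (rule sumJ)
  also have "\<dots> = (\<Sum>m1<b. if m1 = m then (\<Sum>k1<a*c. U $$ (k,k1) * g (J b c m1 k1)) else 0)"
    using W_J k m by (intro sum.cong refl) auto
  also have "\<dots> = (\<Sum>k1<a*c. U $$ (k,k1) * g (J b c m k1))" using m by simp
  finally show ?thesis .
qed

lemma collapseR: assumes k: "k < a*c" and m: "m < b"
  shows "(\<Sum>i<a*b*c. g i * mat_adjoint (ext_SR a b c U) $$ (i, J b c m k)) = (\<Sum>k1<a*c. g (J b c m k1) * cnj (U $$ (k,k1)))"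
proof -
  have W: "ext_SR a b c U \<in> carrier_mat (a*b*c) (a*b*c)" by (rule W_carrier)
  have "(\<Sum>i<a*b*c. g i * mat_adjoint (ext_SR a b c U) $$ (i, J b c m k)) =
     (\<Sum>m1<b. \<Sum>k1<a*c. g (J b c m1 k1) * mat_adjoint (ext_SR a b c U) $$ (J b c m1 k1, J b c m k))" by (rule sumJ)
  also have "\<dots> = (\<Sum>m1<b. if m1 = m then (\<Sum>k1<a*c. g (J b c m1 k1) * cnj (U $$ (k,k1))) else 0)"
  proof (intro sum.cong refl)
    fix m1 assume m1: "m1 \<in> {..<b}"
    show "(\<Sum>k1<a*c. g (J b c m1 k1) * mat_adjoint (ext_SR a b c U) $$ (J b c m1 k1, J b c m k)) =
      (if m1 = m then (\<Sum>k1<a*c. g (J b c m1 k1) * cnj (U $$ (k,k1))) else 0)"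
      using W_J k m m1 J_props W by auto
  qed
  also have "\<dots> = (\<Sum>k1<a*c. g (J b c m k1) * cnj (U $$ (k,k1)))" using m by simp
  finally show ?thesis .
qed

lemma sum_delta_mult: "finite A \<Longrightarrow> (\<Sum>x\<in>A. f x * (if x = y then 1 else 0)) = (if y \<in> A then f y else (0::'a::semiring_1))"
proof -
  assume "finite A"
  have "(\<Sum>x\<in>A. f x * (if x = y then 1 else 0)) = (\<Sum>x\<in>A. if x = y then f x else 0)"
    by (intro sum.cong refl) auto
  then show ?thesis using \<open>finite A\<close> by simp
qed

lemma WXW_entry: assumes X: "X \<in> carrier_mat (a*b*c) (a*b*c)" and m: "m < b" "m' < b" and k: "k < a*c" "k' < a*c"
  shows "(ext_SR a b c U * X * mat_adjoint (ext_SR a b c U)) $$ (J b c m k, J b c m' k') =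
    (\<Sum>k1<a*c. \<Sum>k2<a*c. U $$ (k,k1) * X $$ (J b c m k1, J b c m' k2) * cnj (U $$ (k',k2)))"
proof -
  let ?W = "ext_SR a b c U"
  have W: "?W \<in> carrier_mat (a*b*c) (a*b*c)" by (rule W_carrier)
  have Wa: "mat_adjoint ?W \<in> carrier_mat (a*b*c) (a*b*c)" using W by simp
  have "(?W * X * mat_adjoint ?W) $$ (J b c m k, J b c m' k') =
    (\<Sum>i<a*b*c. \<Sum>l<a*b*c. ?W $$ (J b c m k, i) * X $$ (i,l) * mat_adjoint ?W $$ (l, J b c m' k'))"
    by (rule triple_entry[OF W X Wa]) (use J_props m k in auto)
  also have "\<dots> = (\<Sum>i<a*b*c. ?W $$ (J b c m k, i) * (\<Sum>l<a*b*c. X $$ (i,l) * mat_adjoint ?W $$ (l, J b c m' k')))"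
    by (simp add: sum_distrib_left mult.assoc)
  also have "\<dots> = (\<Sum>k1<a*c. U $$ (k,k1) * (\<Sum>l<a*b*c. X $$ (J b c m k1, l) * mat_adjoint ?W $$ (l, J b c m' k')))"
    by (rule collapseL[OF k(1) m(1)])
  also have "\<dots> = (\<Sum>k1<a*c. U $$ (k,k1) * (\<Sum>k2<a*c. X $$ (J b c m k1, J b c m' k2) * cnj (U $$ (k',k2))))"
    by (simp only: collapseR[OF k(2) m(2)])
  also have "\<dots> = (\<Sum>k1<a*c. \<Sum>k2<a*c. U $$ (k,k1) * X $$ (J b c m k1, J b c m' k2) * cnj (U $$ (k',k2)))"
    by (simp add: sum_distrib_left mult.assoc)
  finally show ?thesis .
qed

lemma red_M_WXW: assumes X: "X \<in> carrier_mat (a*b*c) (a*b*c)" and U: "U \<in> carrier_mat (a*c) (a*c)"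
  and UU: "mat_adjoint U * U = 1\<^sub>m (a*c)"
  shows "red_M a b c (ext_SR a b c U * X * mat_adjoint (ext_SR a b c U)) = red_M a b c X"
proof (rule eq_matI)
  fix m m' assume "m < dim_row (red_M a b c X)" "m' < dim_col (red_M a b c X)"
  then have m: "m < b" "m' < b" by (auto simp: red_M_def)
  have "red_M a b c (ext_SR a b c U * X * mat_adjoint (ext_SR a b c U)) $$ (m,m') =
    (\<Sum>k<a*c. \<Sum>k1<a*c. \<Sum>k2<a*c. U $$ (k,k1) * X $$ (J b c m k1, J b c m' k2) * cnj (U $$ (k,k2)))"
    using m X by (simp add: red_M_J WXW_entry)
  also have "\<dots> = (\<Sum>k1<a*c. \<Sum>k2<a*c. X $$ (J b c m k1, J b c m' k2) * (\<Sum>k<a*c. cnj (U $$ (k,k2)) * U $$ (k,k1)))"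
  proof -
    have "(\<Sum>k<a*c. \<Sum>k1<a*c. \<Sum>k2<a*c. U $$ (k,k1) * X $$ (J b c m k1, J b c m' k2) * cnj (U $$ (k,k2)))
      = (\<Sum>k1<a*c. \<Sum>k<a*c. \<Sum>k2<a*c. U $$ (k,k1) * X $$ (J b c m k1, J b c m' k2) * cnj (U $$ (k,k2)))"
      by (rule sum.swap)
    also have "\<dots> = (\<Sum>k1<a*c. \<Sum>k2<a*c. \<Sum>k<a*c. U $$ (k,k1) * X $$ (J b c m k1, J b c m' k2) * cnj (U $$ (k,k2)))"
      by (rule sum.cong[OF refl]) (rule sum.swap)
    also have "\<dots> = (\<Sum>k1<a*c. \<Sum>k2<a*c. X $$ (J b c m k1, J b c m' k2) * (\<Sum>k<a*c. cnj (U $$ (k,k2)) * U $$ (k,k1)))"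
      by (intro sum.cong refl) (simp add: sum_distrib_left ac_simps)
    finally show ?thesis .
  qed
  also have "\<dots> = (\<Sum>k1<a*c. \<Sum>k2<a*c. X $$ (J b c m k1, J b c m' k2) * (if k2 = k1 then 1 else 0))"
  proof (intro sum.cong refl)
    fix k1 k2 assume k: "k1 \<in> {..<a*c}" "k2 \<in> {..<a*c}"
    have "(mat_adjoint U * U) $$ (k2,k1) = (\<Sum>k<a*c. mat_adjoint U $$ (k2,k) * U $$ (k,k1))"
      using U k by (simp add: scalar_prod_def lessThan_atLeast0)
    then have "(\<Sum>k<a*c. cnj (U $$ (k,k2)) * U $$ (k,k1)) = (if k2 = k1 then 1 else 0)"
      using U k UU by simp
    then show "X $$ (J b c m k1, J b c m' k2) * (\<Sum>k<a*c. cnj (U $$ (k,k2)) * U $$ (k,k1)) =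
      X $$ (J b c m k1, J b c m' k2) * (if k2 = k1 then 1 else 0)" by simp
  qed
  also have "\<dots> = (\<Sum>k1<a*c. X $$ (J b c m k1, J b c m' k1))"
    by (rule sum.cong[OF refl]) (simp add: sum_delta_mult)
  also have "\<dots> = red_M a b c X $$ (m,m')" using m by (simp add: red_M_J)
  finally show "red_M a b c (ext_SR a b c U * X * mat_adjoint (ext_SR a b c U)) $$ (m,m') = red_M a b c X $$ (m,m')" .
qed (auto simp: red_M_def)

lemma red_SR_WXW: assumes X: "X \<in> carrier_mat (a*b*c) (a*b*c)" and U: "U \<in> carrier_mat (a*c) (a*c)"
  shows "red_SR a b c (ext_SR a b c U * X * mat_adjoint (ext_SR a b c U)) = U * red_SR a b c X * mat_adjoint U"
proof (rule eq_matI)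
  have R: "red_SR a b c X \<in> carrier_mat (a*c) (a*c)" by (simp add: red_SR_def)
  fix k k' assume "k < dim_row (U * red_SR a b c X * mat_adjoint U)" "k' < dim_col (U * red_SR a b c X * mat_adjoint U)"
  then have k: "k < a*c" "k' < a*c" using U by auto
  have "red_SR a b c (ext_SR a b c U * X * mat_adjoint (ext_SR a b c U)) $$ (k,k') =
    (\<Sum>m<b. \<Sum>k1<a*c. \<Sum>k2<a*c. U $$ (k,k1) * X $$ (J b c m k1, J b c m k2) * cnj (U $$ (k',k2)))"
    using k X by (simp add: red_SR_J WXW_entry)
  also have "\<dots> = (\<Sum>k1<a*c. \<Sum>k2<a*c. U $$ (k,k1) * (\<Sum>m<b. X $$ (J b c m k1, J b c m k2)) * cnj (U $$ (k',k2)))"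
  proof -
    have "(\<Sum>m<b. \<Sum>k1<a*c. \<Sum>k2<a*c. U $$ (k,k1) * X $$ (J b c m k1, J b c m k2) * cnj (U $$ (k',k2)))
      = (\<Sum>k1<a*c. \<Sum>m<b. \<Sum>k2<a*c. U $$ (k,k1) * X $$ (J b c m k1, J b c m k2) * cnj (U $$ (k',k2)))"
      by (rule sum.swap)
    also have "\<dots> = (\<Sum>k1<a*c. \<Sum>k2<a*c. \<Sum>m<b. U $$ (k,k1) * X $$ (J b c m k1, J b c m k2) * cnj (U $$ (k',k2)))"
      by (rule sum.cong[OF refl]) (rule sum.swap)
    also have "\<dots> = (\<Sum>k1<a*c. \<Sum>k2<a*c. U $$ (k,k1) * (\<Sum>m<b. X $$ (J b c m k1, J b c m k2)) * cnj (U $$ (k',k2)))"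
      by (intro sum.cong refl) (simp add: sum_distrib_left sum_distrib_right)
    finally show ?thesis .
  qed
  also have "\<dots> = (\<Sum>k1<a*c. \<Sum>k2<a*c. U $$ (k,k1) * red_SR a b c X $$ (k1,k2) * mat_adjoint U $$ (k2,k'))"
    using U k by (intro sum.cong refl) (simp add: red_SR_J)
  also have "\<dots> = (U * red_SR a b c X * mat_adjoint U) $$ (k,k')"
    using triple_entry[OF U R _ k] U by simp
  finally show "red_SR a b c (ext_SR a b c U * X * mat_adjoint (ext_SR a b c U)) $$ (k,k') = (U * red_SR a b c X * mat_adjoint U) $$ (k,k')" .
qed (use U in \<open>auto simp: red_SR_def\<close>)



definition ptrM :: "nat \<Rightarrow> nat \<Rightarrow> complex mat \<Rightarrow> complex mat" where
  "ptrM a b \<rho> = mat a a (\<lambda>(s,s'). \<Sum>m<b. \<rho> $$ (ix2 b s m, ix2 b s' m))"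

lemma mtrace_ix2: assumes "R \<in> carrier_mat c c" shows "(\<Sum>r<c. R $$ (r,r)) = mtrace R"
  using assms by (simp add: mtrace_def)

lemma red_SM_kron: assumes \<rho>: "\<rho> \<in> carrier_mat (a*b) (a*b)" and R: "R \<in> carrier_mat c c" and tr: "mtrace R = 1"
  shows "red_SM a b c (kron \<rho> R) = \<rho>"
proof (rule eq_mat2[of _ a b])
  fix s m s' m' assume as: "s < a" "m < b" "s' < a" "m' < b"
  have "red_SM a b c (kron \<rho> R) $$ (ix2 b s m, ix2 b s' m') = (\<Sum>r<c. \<rho> $$ (ix2 b s m, ix2 b s' m') * R $$ (r,r))"
    using as \<rho> R by (simp add: red_SM_entry kron_entry3)
  also have "\<dots> = \<rho> $$ (ix2 b s m, ix2 b s' m')" using tr R by (simp add: sum_distrib_left[symmetric] mtrace_def)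
  finally show "red_SM a b c (kron \<rho> R) $$ (ix2 b s m, ix2 b s' m') = \<rho> $$ (ix2 b s m, ix2 b s' m')" .
qed (use \<rho> in \<open>auto simp: red_SM_def\<close>)

lemma red_S_kron: assumes \<rho>: "\<rho> \<in> carrier_mat (a*b) (a*b)" and R: "R \<in> carrier_mat c c" and tr: "mtrace R = 1"
  shows "red_S a b c (kron \<rho> R) = ptrM a b \<rho>"
proof (rule eq_matI)
  fix s s' assume "s < dim_row (ptrM a b \<rho>)" "s' < dim_col (ptrM a b \<rho>)"
  then have as: "s < a" "s' < a" by (auto simp: ptrM_def)
  have "red_S a b c (kron \<rho> R) $$ (s, s') = (\<Sum>m<b. \<Sum>r<c. \<rho> $$ (ix2 b s m, ix2 b s' m) * R $$ (r,r))"
    using as \<rho> R by (simp add: red_S_entry kron_entry3)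
  also have "\<dots> = (\<Sum>m<b. \<rho> $$ (ix2 b s m, ix2 b s' m))" using tr R by (simp add: sum_distrib_left[symmetric] mtrace_def)
  also have "\<dots> = ptrM a b \<rho> $$ (s,s')" using as by (simp add: ptrM_def)
  finally show "red_S a b c (kron \<rho> R) $$ (s, s') = ptrM a b \<rho> $$ (s,s')" .
qed (auto simp: ptrM_def red_S_def)

lemma red_SR_kron: assumes \<rho>: "\<rho> \<in> carrier_mat (a*b) (a*b)" and R: "R \<in> carrier_mat c c"
  shows "red_SR a b c (kron \<rho> R) = kron (ptrM a b \<rho>) R"
proof (rule eq_mat2[of _ a c])
  show "kron (ptrM a b \<rho>) R \<in> carrier_mat (a*c) (a*c)" using R by (simp add: kron_def ptrM_def)
  fix s r s' r' assume as: "s < a" "r < c" "s' < a" "r' < c"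
  have "red_SR a b c (kron \<rho> R) $$ (ix2 c s r, ix2 c s' r') = (\<Sum>m<b. \<rho> $$ (ix2 b s m, ix2 b s' m) * R $$ (r,r'))"
    using as \<rho> R by (simp add: red_SR_entry kron_entry3)
  also have "\<dots> = ptrM a b \<rho> $$ (s,s') * R $$ (r,r')" using as by (simp add: ptrM_def sum_distrib_right)
  also have "\<dots> = kron (ptrM a b \<rho>) R $$ (ix2 c s r, ix2 c s' r')"
    using as R ix2_props[of s a r c] ix2_props[of s' a r' c] by (simp add: kron_index ptrM_def)
  finally show "red_SR a b c (kron \<rho> R) $$ (ix2 c s r, ix2 c s' r') = kron (ptrM a b \<rho>) R $$ (ix2 c s r, ix2 c s' r')" .
qed (auto simp: red_SR_def)

lemma ptrM_density: assumes d: "density_op (a*b) \<rho>"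
  shows "density_op a (ptrM a b \<rho>)"
proof -
  have \<rho>: "\<rho> \<in> carrier_mat (a*b) (a*b)" and psd: "psd_mat \<rho>" and tr: "mtrace \<rho> = 1"
    using d unfolding density_op_def by auto
  have h: "hermitian_mat \<rho>" using psd unfolding psd_mat_def by auto
  let ?P = "ptrM a b \<rho>"
  have P: "?P \<in> carrier_mat a a" by (simp add: ptrM_def)
  have ixl: "ix2 b s m < a*b" if "s < a" "m < b" for s m using ix2_props that by auto
  have hP: "hermitian_mat ?P" unfolding hermitian_mat_def
  proof
    show "square_mat ?P" using P by simp
    show "mat_adjoint ?P = ?P"
    proof (rule eq_matI)
      fix s s' assume "s < dim_row ?P" "s' < dim_col ?P"
      then have as: "s < a" "s' < a" using P by auto
      have "mat_adjoint ?P $$ (s,s') = cnj (?P $$ (s',s))" using as P by simp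
      also have "\<dots> = (\<Sum>m<b. cnj (\<rho> $$ (ix2 b s' m, ix2 b s m)))" using as by (simp add: ptrM_def)
      also have "\<dots> = (\<Sum>m<b. \<rho> $$ (ix2 b s m, ix2 b s' m))"
      proof (rule sum.cong[OF refl])
        fix m assume "m \<in> {..<b}"
        then have "\<rho> $$ (ix2 b s m, ix2 b s' m) = cnj (\<rho> $$ (ix2 b s' m, ix2 b s m))"
          using as ixl by (intro herm_entry[OF h \<rho>]) auto
        then show "cnj (\<rho> $$ (ix2 b s' m, ix2 b s m)) = \<rho> $$ (ix2 b s m, ix2 b s' m)" by simp
      qed
      also have "\<dots> = ?P $$ (s,s')" using as by (simp add: ptrM_def)
      finally show "mat_adjoint ?P $$ (s,s') = ?P $$ (s,s')" .
    qed (use P in auto)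
  qed
  have psdP: "psd_mat ?P" unfolding psd_mat_def
  proof (intro conjI allI hP)
    fix v :: "nat \<Rightarrow> complex"
    define G where "G = (\<lambda>s s' m. cnj (v s) * \<rho> $$ (ix2 b s m, ix2 b s' m) * v s')"
    define w where "w = (\<lambda>m i. if i mod b = m then v (i div b) else 0)"
    define q where "q = (\<lambda>m. \<Sum>i<a*b. \<Sum>j<a*b. cnj (w m i) * \<rho> $$ (i,j) * w m j)"
    have q0: "0 \<le> Re (q m)" for m using psd \<rho> unfolding psd_mat_def q_def by auto
    have wix: "w m (ix2 b s m1) = (if m1 = m then v s else 0)" if "m1 < b" for m s m1
      using ix2_props[of s "Suc s" m1 b] that by (auto simp: w_def)
    have qG: "q m = (\<Sum>s<a. \<Sum>s'<a. G s s' m)" if m: "m < b" for m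
    proof -
      have "q m = (\<Sum>s<a. \<Sum>m1<b. \<Sum>s'<a. \<Sum>m2<b. cnj (w m (ix2 b s m1)) * \<rho> $$ (ix2 b s m1, ix2 b s' m2) * w m (ix2 b s' m2))"
        unfolding q_def by (simp add: sum2)
      also have "\<dots> = (\<Sum>s<a. \<Sum>m1<b. \<Sum>s'<a. \<Sum>m2<b. if m1 = m then (if m2 = m then G s s' m else 0) else 0)"
        by (intro sum.cong refl) (simp add: wix G_def)
      also have "\<dots> = (\<Sum>s<a. \<Sum>s'<a. G s s' m)" using m by (simp add: sum_ifP)
      finally show ?thesis .
    qed
    have "(\<Sum>i<dim_row ?P. \<Sum>j<dim_row ?P. cnj (v i) * ?P $$ (i,j) * v j) = (\<Sum>s<a. \<Sum>s'<a. \<Sum>m<b. G s s' m)"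
    proof -
      have dP: "dim_row ?P = a" using P by simp
      have "cnj (v s) * ?P $$ (s,s') * v s' = (\<Sum>m<b. G s s' m)" if "s < a" "s' < a" for s s'
        using that by (simp add: ptrM_def G_def sum_distrib_left sum_distrib_right)
      then show ?thesis unfolding dP by simp
    qed
    also have "\<dots> = (\<Sum>m<b. \<Sum>s<a. \<Sum>s'<a. G s s' m)"
      by (simp add: sum.swap[of _ "{..<b}"])
    also have "\<dots> = (\<Sum>m<b. q m)" using qG by simp
    finally have "Re (\<Sum>i<dim_row ?P. \<Sum>j<dim_row ?P. cnj (v i) * ?P $$ (i,j) * v j) = (\<Sum>m<b. Re (q m))" by simp
    also have "\<dots> \<ge> 0" using q0 by (intro sum_nonneg) auto
    finally show "0 \<le> Re (\<Sum>i<dim_row ?P. \<Sum>j<dim_row ?P. cnj (v i) * ?P $$ (i,j) * v j)" .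
  qed
  have "mtrace ?P = (\<Sum>s<a. \<Sum>m<b. \<rho> $$ (ix2 b s m, ix2 b s m))" by (simp add: mtrace_def ptrM_def)
  also have "\<dots> = mtrace \<rho>" using \<rho> by (simp add: mtrace_def sum2)
  finally have "mtrace ?P = 1" using tr by simp
  then show ?thesis unfolding density_op_def using P psdP by simp
qed



lemma good_props: assumes "good A n" shows "A \<in> carrier_mat n n" "mtrace A = 1"
proof -
  obtain T P Q where d: "gooddec A n T P Q" using assms good_def by auto
  then show "A \<in> carrier_mat n n" by (simp add: gooddec_def)
  have sim: "similar_mat_wit A T P Q" and T: "T \<in> carrier_mat n n"
    and r: "\<forall>i<n. Im (T $$ (i,i)) = 0 \<and> 0 \<le> Re (T $$ (i,i))" and s: "(\<Sum>i<n. Re (T $$ (i,i))) = 1"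
    using d by (auto simp: gooddec_def)
  have "mtrace T = (\<Sum>i<n. T $$ (i,i))" using T by (simp add: mtrace_def)
  also have "\<dots> = (\<Sum>i<n. complex_of_real (Re (T $$ (i,i))))" using r by (intro sum.cong refl) (simp add: complex_eq_iff)
  also have "\<dots> = 1" using s by (metis of_real_1 of_real_sum)
  finally show "mtrace A = 1" using mtrace_sim[OF sim] by simp
qed

lemma unitary_entropy: assumes U: "U \<in> carrier_mat n n" and UU: "U * mat_adjoint U = 1\<^sub>m n"
  and UU': "mat_adjoint U * U = 1\<^sub>m n" and X: "X \<in> carrier_mat n n"
  shows "vn_entropy (U * X * mat_adjoint U) = vn_entropy X"
proof -
  have "similar_mat (U * X * mat_adjoint U) X" unfolding similar_mat_def
    using similar_mat_witI[OF UU UU' refl, of X] U X by auto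
  then have "char_poly (U * X * mat_adjoint U) = char_poly X" by (rule char_poly_similar)
  then show ?thesis by (simp add: vn_entropy_def)
qed

theorem theorem3:
  fixes dS dM dR :: nat and \<rho>SM H U :: "complex mat" and \<beta> :: real
  assumes "0 < dS" and "0 < dM" and "0 < dR"
    and "density_op (dS * dM) \<rho>SM"
    and "H \<in> carrier_mat dR dR" and "hermitian_mat H"
    and "0 < \<beta>"
    and "U \<in> carrier_mat (dS * dR) (dS * dR)" and "unitary_mat U"
  shows
    "let \<rho>iR = gibbs_state \<beta> H;
         \<rho>i = kron \<rho>SM \<rho>iR;
         W = ext_SR dS dM dR U;
         \<rho>f = W * \<rho>i * mat_adjoint W;
         QR = Re (mtrace ((red_R dS dM dR \<rho>f - red_R dS dM dR \<rho>i) * H));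
         \<Sigma>S = vn_entropy (red_S dS dM dR \<rho>f) - vn_entropy (red_S dS dM dR \<rho>i) + \<beta> * QR;
         condS = (\<lambda>\<rho>. vn_entropy (red_SM dS dM dR \<rho>) - vn_entropy (red_M dS dM dR \<rho>));
         \<Sigma>SM = condS \<rho>f - condS \<rho>i + \<beta> * QR;
         \<Sigma>I = \<Sigma>SM - \<Sigma>S
     in \<Sigma>I = vn_entropy (red_SR dS dM dR \<rho>f) + vn_entropy (red_SM dS dM dR \<rho>f)
              - vn_entropy (red_S dS dM dR \<rho>f) - vn_entropy \<rho>f"
proof -
  note a = assms
  define R where "R = gibbs_state \<beta> H"
  define \<rho>i where "\<rho>i = kron \<rho>SM R"
  define W where "W = ext_SR dS dM dR U"
  define \<rho>f where "\<rho>f = W * \<rho>i * mat_adjoint W"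
  define \<rho>S where "\<rho>S = ptrM dS dM \<rho>SM"
  have gR: "good R dR" unfolding R_def by (rule gibbs_good[OF a(5,6,3)])
  have R: "R \<in> carrier_mat dR dR" and trR: "mtrace R = 1" using good_props[OF gR] by auto
  have \<rho>SM: "\<rho>SM \<in> carrier_mat (dS*dM) (dS*dM)" using a(4) by (simp add: density_op_def)
  have gSM: "good \<rho>SM (dS*dM)" by (rule density_good[OF a(4)])
  have gS: "good \<rho>S dS" unfolding \<rho>S_def by (rule density_good[OF ptrM_density[OF a(4)]])
  have \<rho>S: "\<rho>S \<in> carrier_mat dS dS" by (simp add: \<rho>S_def ptrM_def)
  have \<rho>i: "\<rho>i \<in> carrier_mat (dS*dM*dR) (dS*dM*dR)" using \<rho>SM R by (simp add: \<rho>i_def kron_def)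
  have UU: "U * mat_adjoint U = 1\<^sub>m (dS*dR)" and UU': "mat_adjoint U * U = 1\<^sub>m (dS*dR)"
    using a(8,9) by (auto simp: unitary_mat_def)
  have WW: "W * mat_adjoint W = 1\<^sub>m (dS*dM*dR)" "mat_adjoint W * W = 1\<^sub>m (dS*dM*dR)"
    unfolding W_def using W_unitary[OF a(8) UU UU'] by auto
  have W: "W \<in> carrier_mat (dS*dM*dR) (dS*dM*dR)" unfolding W_def by (rule W_carrier)
  have e1: "red_M dS dM dR \<rho>f = red_M dS dM dR \<rho>i"
    unfolding \<rho>f_def W_def by (rule red_M_WXW[OF \<rho>i a(8) UU'])
  have e2: "vn_entropy \<rho>f = vn_entropy \<rho>i"
    unfolding \<rho>f_def by (rule unitary_entropy[OF W WW \<rho>i])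
  have rSR: "red_SR dS dM dR \<rho>i = kron \<rho>S R" unfolding \<rho>i_def \<rho>S_def by (rule red_SR_kron[OF \<rho>SM R])
  have rSRc: "red_SR dS dM dR \<rho>i \<in> carrier_mat (dS*dR) (dS*dR)" by (simp add: red_SR_def)
  have e3: "vn_entropy (red_SR dS dM dR \<rho>f) = vn_entropy (red_SR dS dM dR \<rho>i)"
    unfolding \<rho>f_def W_def red_SR_WXW[OF \<rho>i a(8)] by (rule unitary_entropy[OF a(8) UU UU' rSRc])
  have e4: "red_SM dS dM dR \<rho>i = \<rho>SM" unfolding \<rho>i_def by (rule red_SM_kron[OF \<rho>SM R trR])
  have e5: "red_S dS dM dR \<rho>i = \<rho>S" unfolding \<rho>i_def \<rho>S_def by (rule red_S_kron[OF \<rho>SM R trR])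
  have k1: "vn_entropy \<rho>i = vn_entropy \<rho>SM + vn_entropy R"
    unfolding \<rho>i_def by (rule kron_good[OF gSM gR]) (use a(1,2,3) in auto)
  have k2: "vn_entropy (kron \<rho>S R) = vn_entropy \<rho>S + vn_entropy R"
    by (rule kron_good[OF gS gR]) (use a(1,3) in auto)
  show ?thesis
    unfolding Let_def R_def[symmetric] \<rho>i_def[symmetric] W_def[symmetric] \<rho>f_def[symmetric]
    using e1 e2 e3 e4 e5 k1 k2 rSR by simp
qed


end
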